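(* Let $f(x_1,x_2,x_3,x_4)=\det P(x_1,x_2,x_3,x_4)$ where $$P(x_1,x_2,x_3,x_4)=\begin{bmatrix}x_1 & x_2 & x_3 & x_4\\ -nx_2 & x_1+mx_2 & -nx_4 & x_3+mx_4\\ -qx_3 & -qx_4 & x_1+px_3 & x_2+px_4\\ qnx_4 & -q(x_3+mx_4) & -nx_2-pnx_4 & x_1+mx_2+p(x_3+mx_4)\end{bmatrix}$$ with $(m,n,p,q)=(5,-23,2,-7)$. Then the quartic diophantine equation $f(x_1,x_2,x_3,x_4)=1$ has infinitely many solutions in positive integers (one of them being $(6,2,3,1)$). *)

theory Defs
  imports "Jordan_Normal_Form.Determinant"
begin

definition Pmat :: "int \<Rightarrow> int \<Rightarrow> int \<Rightarrow> int \<Rightarrow> int \<Rightarrow> int \<Rightarrow> int \<Rightarrow> int \<Rightarrow> int mat" where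
  "Pmat m n p q x1 x2 x3 x4 = mat_of_rows_list 4
    [[x1, x2, x3, x4],
     [- n * x2, x1 + m * x2, - n * x4, x3 + m * x4],
     [- q * x3, - q * x4, x1 + p * x3, x2 + p * x4],
     [q * n * x4, - q * (x3 + m * x4), - n * x2 - p * n * x4, x1 + m * x2 + p * (x3 + m * x4)]]"

definition f :: "int \<Rightarrow> int \<Rightarrow> int \<Rightarrow> int \<Rightarrow> int" where
  "f x1 x2 x3 x4 = det (Pmat 5 (-23) 2 (-7) x1 x2 x3 x4)"

end

theory Submission imports Defs begin
lemma det_mat_Suc:
  "det (mat (Suc k) (Suc k) g :: 'a::comm_ring_1 mat) =
   (\<Sum>j<Suc k. g (0,j) * (-1)^j * det (mat k k (\<lambda>(i,l). g (Suc i, if l<j then l else Suc l))))"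
proof -
  have A: "mat (Suc k) (Suc k) g \<in> carrier_mat (Suc k) (Suc k)" by simp
  have L: "det (mat (Suc k) (Suc k) g) = (\<Sum>j<Suc k. mat (Suc k) (Suc k) g $$ (0,j) * cofactor (mat (Suc k) (Suc k) g) 0 j)"
    by (rule laplace_expansion_row[OF A]) simp
  show ?thesis
    unfolding L cofactor_def mat_delete_def
  proof (intro sum.cong refl)
    fix j assume j: "j \<in> {..<Suc k}"
    have "mat (dim_row (mat (Suc k) (Suc k) g) - 1) (dim_col (mat (Suc k) (Suc k) g) - 1)
        (\<lambda>(i', j'). mat (Suc k) (Suc k) g $$ (if i' < 0 then i' else Suc i', if j' < j then j' else Suc j'))
       = mat k k (\<lambda>(i,l). g (Suc i, if l<j then l else Suc l))"
      using j by (intro eq_matI) auto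
    moreover have "mat (Suc k) (Suc k) g $$ (0, j) = g (0,j)" using j by simp
    ultimately show "mat (Suc k) (Suc k) g $$ (0, j) *
         ((- 1) ^ (0 + j) *
          det (mat (dim_row (mat (Suc k) (Suc k) g) - 1) (dim_col (mat (Suc k) (Suc k) g) - 1)
                (\<lambda>(i', j'). mat (Suc k) (Suc k) g $$ (if i' < 0 then i' else Suc i', if j' < j then j' else Suc j')))) =
         g (0, j) * (- 1) ^ j * det (mat k k (\<lambda>(i, l). g (Suc i, if l < j then l else Suc l)))"
      by simp
  qed
qed

lemma det_mat_0: "det (mat 0 0 g) = 1" by simp

lemma f6: "f 6 2 3 1 = 1"
  unfolding f_def Pmat_def mat_of_rows_list_def
  by (simp add: numeral_eq_Suc det_mat_Suc lessThan_Suc)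

lemma finv: "f (6*x1+46*x2+21*x3+161*x4) (2*x1+16*x2+7*x3+56*x4) (3*x1+23*x2+12*x3+92*x4) (x1+8*x2+4*x3+32*x4) = f x1 x2 x3 x4"
  unfolding f_def Pmat_def mat_of_rows_list_def
  apply (simp add: numeral_eq_Suc det_mat_Suc lessThan_Suc)
  by (simp add: algebra_simps)


definition T :: "int \<times> int \<times> int \<times> int \<Rightarrow> int \<times> int \<times> int \<times> int" where
  "T = (\<lambda>(x1,x2,x3,x4). (6*x1+46*x2+21*x3+161*x4, 2*x1+16*x2+7*x3+56*x4, 3*x1+23*x2+12*x3+92*x4, x1+8*x2+4*x3+32*x4))"

definition S :: "int \<times> int \<times> int \<times> int \<Rightarrow> bool" where
  "S = (\<lambda>(x1,x2,x3,x4). x1 > 0 \<and> x2 > 0 \<and> x3 > 0 \<and> x4 > 0 \<and> f x1 x2 x3 x4 = 1)"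

lemma S_T: "S x \<Longrightarrow> S (T x)"
  by (cases x) (auto simp: S_def T_def finv)

lemma T_gt: "S x \<Longrightarrow> fst (T x) > fst x"
  by (cases x) (auto simp: S_def T_def)

lemma seq_S: "S ((T ^^ k) (6,2,3,1))"
  by (induction k) (auto simp: S_T, simp add: S_def f6)

lemma seq_mono: "strict_mono (\<lambda>k. fst ((T ^^ k) (6,2,3,1)))"
  unfolding strict_mono_Suc_iff by (simp add: T_gt seq_S)

theorem mainTheorem5:
  shows "f 6 2 3 1 = 1 \<and>
    infinite {(x1::int, x2::int, x3::int, x4::int).
      x1 > 0 \<and> x2 > 0 \<and> x3 > 0 \<and> x4 > 0 \<and> f x1 x2 x3 x4 = 1}"
proof
  show "f 6 2 3 1 = 1" by (rule f6)
  let ?g = "\<lambda>k. (T ^^ k) (6,2,3,1)"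
  have inj: "inj ?g"
  proof (rule injI)
    fix a b assume "?g a = ?g b"
    hence "fst (?g a) = fst (?g b)" by simp
    thus "a = b" using strict_mono_eq[OF seq_mono] by blast
  qed
  have sub: "range ?g \<subseteq> {(x1::int, x2::int, x3::int, x4::int).
      x1 > 0 \<and> x2 > 0 \<and> x3 > 0 \<and> x4 > 0 \<and> f x1 x2 x3 x4 = 1}"
  proof
    fix y assume "y \<in> range ?g"
    then obtain k where "y = ?g k" by blast
    hence "S y" using seq_S by simp
    thus "y \<in> {(x1::int, x2::int, x3::int, x4::int).
      x1 > 0 \<and> x2 > 0 \<and> x3 > 0 \<and> x4 > 0 \<and> f x1 x2 x3 x4 = 1}"
      by (cases y) (auto simp: S_def)
  qed
  have "infinite (range ?g)" using inj by (simp add: range_inj_infinite)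
  thus "infinite {(x1::int, x2::int, x3::int, x4::int).
      x1 > 0 \<and> x2 > 0 \<and> x3 > 0 \<and> x4 > 0 \<and> f x1 x2 x3 x4 = 1}"
    using sub infinite_super by blast
qed

end
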